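(* Let $w$ be a word and let $v_x, v_y$ be vertices of $G(w)$ with $\mathrm{dist}(v_x, v_y) = d$. Let $\chi_i$ denote the index of the $i$-th occurrence of $x$ in $w$ and $\gamma_j$ the index of the $j$-th occurrence of $y$ in $w$. Then for every $i$ such that $\gamma_i$ exists: if $\chi_{i-d}$ exists then $\chi_{i-d} \le \gamma_i$, and if $\chi_{i+d}$ exists then $\gamma_i \le \chi_{i+d}$.
   Context: For a set of symbols $\mathcal S$, $\pi_{\mathcal S}(w)$ is the subsequence of $w$ consisting of all occurrences of symbols in $\mathcal S$. Symbols $x,y$ alternate in $w$ if $\pi_{\{x,y\}}(w) \in \{(xy)^k, (xy)^kx, (yx)^k, (yx)^ky : k \ge 0\}$. $G(w)$ has one vertex $v_a$ per symbol $a$ of the alphabet and undirected edge $(v_x,v_y)$ iff $x\neq y$ alternate in $w$; $\mathrm{dist}$ is the shortest-path distance in $G(w)$. *)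

theory Defs
  imports Main "HOL-Library.Extended_Nat"
begin

definition proj :: "'a set \<Rightarrow> 'a list \<Rightarrow> 'a list" where
  "proj S w = filter (\<lambda>c. c \<in> S) w"

definition altpow :: "'a \<Rightarrow> 'a \<Rightarrow> nat \<Rightarrow> 'a list" where
  "altpow x y k = concat (replicate k [x, y])"

definition alternate :: "'a list \<Rightarrow> 'a \<Rightarrow> 'a \<Rightarrow> bool" where
  "alternate w x y \<longleftrightarrow> (\<exists>k. proj {x, y} w \<in>
     {altpow x y k, altpow x y k @ [x], altpow y x k, altpow y x k @ [y]})"

text \<open>Edge relation of the alternation graph G(w) over the alphabet \<Sigma>
  (vertices are identified with the symbols of \<Sigma>).\<close>
definition alt_edge :: "'a set \<Rightarrow> 'a list \<Rightarrow> 'a \<Rightarrow> 'a \<Rightarrow> bool" where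
  "alt_edge \<Sigma> w x y \<longleftrightarrow> x \<in> \<Sigma> \<and> y \<in> \<Sigma> \<and> x \<noteq> y \<and> alternate w x y"

definition alt_walk :: "'a set \<Rightarrow> 'a list \<Rightarrow> 'a \<Rightarrow> 'a \<Rightarrow> nat \<Rightarrow> bool" where
  "alt_walk \<Sigma> w x y n \<longleftrightarrow> (\<exists>ps. length ps = Suc n \<and> hd ps = x \<and> last ps = y \<and>
      set ps \<subseteq> \<Sigma> \<and> (\<forall>i<n. alt_edge \<Sigma> w (ps ! i) (ps ! Suc i)))"

definition alt_dist :: "'a set \<Rightarrow> 'a list \<Rightarrow> 'a \<Rightarrow> 'a \<Rightarrow> enat" where
  "alt_dist \<Sigma> w x y = (if \<exists>n. alt_walk \<Sigma> w x y n
      then enat (LEAST n. alt_walk \<Sigma> w x y n) else \<infinity>)"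

text \<open>Positions (0-based) of the occurrences of x in w, in increasing order;
  the i-th occurrence (1-based) is at position occs w x ! (i - 1).\<close>
definition occs :: "'a list \<Rightarrow> 'a \<Rightarrow> nat list" where
  "occs w x = filter (\<lambda>p. w ! p = x) [0..<length w]"

end

theory Submission
  imports Defs
begin

definition cnt :: "'a list \<Rightarrow> 'a \<Rightarrow> nat \<Rightarrow> nat" where
  "cnt w x t = length (filter (\<lambda>c. c = x) (take t w))"

lemma altpow_Suc: "altpow a b (Suc k) = a # b # altpow a b k"
  by (simp add: altpow_def)

lemma pre_pat:
  assumes "a \<noteq> b" "u @ z = altpow a b k @ e" "e = [] \<or> e = [a]"
  shows "length (filter (\<lambda>c. c = a) u) = length (filter (\<lambda>c. c = b) u) \<or>
         length (filter (\<lambda>c. c = a) u) = length (filter (\<lambda>c. c = b) u) + 1"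
  using assms
proof (induction k arbitrary: u)
  case 0
  then show ?case by (auto simp: altpow_def append_eq_Cons_conv)
next
  case (Suc k)
  from Suc.prems(2) have "u @ z = a # b # (altpow a b k @ e)" by (simp add: altpow_Suc)
  then consider "u = []" | "u = [a]" | u' where "u = a # b # u'" "u' @ z = altpow a b k @ e"
    by (auto simp: append_eq_Cons_conv Cons_eq_append_conv)
  then show ?case
  proof cases
    case 3
    with Suc.IH[of u'] Suc.prems show ?thesis by auto
  qed (use Suc.prems in auto)
qed

lemma alt_bound:
  assumes "alternate w a b" "a \<noteq> b"
  shows "\<bar>int (cnt w a t) - int (cnt w b t)\<bar> \<le> 1"
proof -
  let ?u = "proj {a,b} (take t w)"
  let ?z = "proj {a,b} (drop t w)"
  have split: "?u @ ?z = proj {a,b} w"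
    by (metis append_take_drop_id filter_append proj_def)
  have ca: "cnt w a t = length (filter (\<lambda>c. c = a) ?u)"
    unfolding cnt_def proj_def filter_filter by (intro arg_cong[where f=length] filter_cong) auto
  have cb: "cnt w b t = length (filter (\<lambda>c. c = b) ?u)"
    unfolding cnt_def proj_def filter_filter by (intro arg_cong[where f=length] filter_cong) auto
  from assms(1) obtain k where k: "proj {a,b} w \<in>
     {altpow a b k, altpow a b k @ [a], altpow b a k, altpow b a k @ [b]}"
    unfolding alternate_def by blast
  then consider "?u @ ?z = altpow a b k @ []" | "?u @ ?z = altpow a b k @ [a]"
    | "?u @ ?z = altpow b a k @ []" | "?u @ ?z = altpow b a k @ [b]"
    using split by auto
  then show ?thesis
  proof cases
    case 1 from pre_pat[OF assms(2) this] show ?thesis unfolding ca cb by auto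
  next
    case 2 from pre_pat[OF assms(2) this] show ?thesis unfolding ca cb by auto
  next
    case 3 from pre_pat[OF assms(2)[symmetric] this] show ?thesis unfolding ca cb by auto
  next
    case 4 from pre_pat[OF assms(2)[symmetric] this] show ?thesis unfolding ca cb by auto
  qed
qed

lemma walk_bound:
  assumes "alt_walk \<Sigma> w x y n"
  shows "\<bar>int (cnt w x t) - int (cnt w y t)\<bar> \<le> int n"
proof -
  from assms obtain ps where ps: "length ps = Suc n" "hd ps = x" "last ps = y"
    "\<forall>i<n. alt_edge \<Sigma> w (ps ! i) (ps ! Suc i)" unfolding alt_walk_def by blast
  have "\<bar>int (cnt w (ps!0) t) - int (cnt w (ps!k) t)\<bar> \<le> int k" if "k \<le> n" for k
    using that
  proof (induction k)
    case 0 then show ?case by simp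
  next
    case (Suc k)
    then have "alt_edge \<Sigma> w (ps ! k) (ps ! Suc k)" using ps(4) by auto
    then have "\<bar>int (cnt w (ps!k) t) - int (cnt w (ps!Suc k) t)\<bar> \<le> 1"
      unfolding alt_edge_def by (simp add: alt_bound)
    with Suc show ?case by auto
  qed
  moreover have "ps ! 0 = x" using ps by (metis hd_conv_nth list.size(3) nat.distinct(1))
  moreover have "ps ! n = y" using ps by (metis diff_Suc_1 last_conv_nth list.size(3) nat.distinct(1))
  ultimately show ?thesis by fastforce
qed

lemma cnt_card: "cnt w x t = card {q \<in> set (occs w x). q < t}"
proof -
  have "cnt w x t = card {p. p < length (take t w) \<and> take t w ! p = x}"
    unfolding cnt_def by (simp add: length_filter_conv_card)
  also have "{p. p < length (take t w) \<and> take t w ! p = x} = {q \<in> set (occs w x). q < t}"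
    by (auto simp: occs_def)
  finally show ?thesis .
qed

lemma occs_sorted: "sorted_wrt (<) (occs w x)"
  unfolding occs_def by (simp add: sorted_wrt_filter)

lemma occs_lt:
  assumes "cnt w x t > j" "j < length (occs w x)"
  shows "occs w x ! j < t"
proof (rule ccontr)
  let ?L = "occs w x"
  assume "\<not> ?L ! j < t"
  have "{q \<in> set ?L. q < t} \<subseteq> (\<lambda>m. ?L ! m) ` {0..<j}"
  proof
    fix q assume "q \<in> {q \<in> set ?L. q < t}"
    then obtain m where m: "m < length ?L" "?L ! m = q" "q < t" by (auto simp: in_set_conv_nth)
    have "m < j"
    proof (rule ccontr)
      assume "\<not> m < j"
      then have "?L ! j \<le> ?L ! m"
      proof (cases "j = m")
        case False
        then have "j < m" using \<open>\<not> m < j\<close> by linarith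
        then show ?thesis using sorted_wrt_nth_less[OF occs_sorted[of w x] \<open>j < m\<close> m(1)] by simp
      qed simp
      with m \<open>\<not> ?L ! j < t\<close> show False by auto
    qed
    with m show "q \<in> (\<lambda>m. ?L ! m) ` {0..<j}" by auto
  qed
  then have "card {q \<in> set ?L. q < t} \<le> card ((\<lambda>m. ?L ! m) ` {0..<j})"
    by (intro card_mono) auto
  also have "\<dots> \<le> card {0..<j}" by (rule card_image_le) auto
  finally have "card {q \<in> set ?L. q < t} \<le> j" by simp
  with assms(1) cnt_card show False by (metis leD)
qed

lemma occs_ge:
  assumes "i \<ge> 1" "i \<le> length (occs w x)"
  shows "cnt w x (occs w x ! (i - 1) + 1) \<ge> i"
proof -
  let ?L = "occs w x"
  have "(\<lambda>m. ?L ! m) ` {0..<i} \<subseteq> {q \<in> set ?L. q < ?L ! (i - 1) + 1}"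
  proof
    fix q assume "q \<in> (\<lambda>m. ?L ! m) ` {0..<i}"
    then obtain m where m: "m < i" "q = ?L ! m" by auto
    have "?L ! m \<le> ?L ! (i - 1)"
    proof (cases "m = i - 1")
      case False
      then have "m < i - 1" using m by linarith
      have "i - 1 < length ?L" using assms by linarith
      then show ?thesis using sorted_wrt_nth_less[OF occs_sorted[of w x] \<open>m < i - 1\<close>]
        by simp
    qed simp
    then show "q \<in> {q \<in> set ?L. q < ?L ! (i - 1) + 1}" using m assms by auto
  qed
  moreover have "inj_on (\<lambda>m. ?L ! m) {0..<i}"
  proof -
    have "distinct ?L" unfolding occs_def by simp
    then show ?thesis using assms by (auto simp: inj_on_def nth_eq_iff_index_eq)
  qed
  ultimately have "card ((\<lambda>m. ?L ! m) ` {0..<i}) \<le> card {q \<in> set ?L. q < ?L ! (i - 1) + 1}"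
    by (intro card_mono) auto
  then have "card {0..<i} \<le> card {q \<in> set ?L. q < ?L ! (i - 1) + 1}"
    using card_image[OF \<open>inj_on _ _\<close>] by simp
  then show ?thesis by (simp add: cnt_card)
qed

theorem lemma7:
  fixes \<Sigma> :: "'a set" and w :: "'a list" and x y :: 'a and d i :: nat
  assumes "set w \<subseteq> \<Sigma>" and "x \<in> \<Sigma>" and "y \<in> \<Sigma>"
    and "alt_dist \<Sigma> w x y = enat d"
    and "1 \<le> i" and "i \<le> length (occs w y)"
  shows "(d < i \<and> i - d \<le> length (occs w x) \<longrightarrow>
            occs w x ! (i - d - 1) \<le> occs w y ! (i - 1))
       \<and> (i + d \<le> length (occs w x) \<longrightarrow>
            occs w y ! (i - 1) \<le> occs w x ! (i + d - 1))"
proof -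
  have ex: "\<exists>n. alt_walk \<Sigma> w x y n"
    using assms(4) unfolding alt_dist_def by (cases "\<exists>n. alt_walk \<Sigma> w x y n") auto
  then have "d = (LEAST n. alt_walk \<Sigma> w x y n)"
    using assms(4) unfolding alt_dist_def by auto
  then have walk: "alt_walk \<Sigma> w x y d" using LeastI_ex[OF ex] by simp
  note B = walk_bound[OF walk]
  show ?thesis
  proof (intro conjI impI)
    assume a: "d < i \<and> i - d \<le> length (occs w x)"
    let ?t = "occs w y ! (i - 1) + 1"
    have "cnt w y ?t \<ge> i" using occs_ge[OF assms(5,6)] .
    moreover have "\<bar>int (cnt w x ?t) - int (cnt w y ?t)\<bar> \<le> int d" by (rule B)
    ultimately have c: "cnt w x ?t > i - d - 1" using a by linarith
    have "i - d - 1 < length (occs w x)" using a by linarith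
    from occs_lt[OF c this] have "occs w x ! (i - d - 1) < ?t" .
    then show "occs w x ! (i - d - 1) \<le> occs w y ! (i - 1)" by simp
  next
    assume a: "i + d \<le> length (occs w x)"
    let ?t = "occs w x ! (i + d - 1) + 1"
    have "1 \<le> i + d" using assms(5) by simp
    from occs_ge[OF this a] have "cnt w x ?t \<ge> i + d" .
    moreover have "\<bar>int (cnt w x ?t) - int (cnt w y ?t)\<bar> \<le> int d" by (rule B)
    ultimately have c: "cnt w y ?t > i - 1" using assms(5) by linarith
    have "i - 1 < length (occs w y)" using assms(5,6) by linarith
    from occs_lt[OF c this] have "occs w y ! (i - 1) < ?t" .
    then show "occs w y ! (i - 1) \<le> occs w x ! (i + d - 1)" by simp
  qed
qed

end
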